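(* Let $0 < \nu \leq \tau < \eta \ll 1$ be constants. Suppose $G$ is a graph on $n$ vertices with $\delta(G) \geq \eta n$ which is a robust $(\nu,\tau)$-expander, and let $M$ be a perfect matching in $G$. Then for every $a \in V(G)$, $G$ contains a shifted $M$-walk of length at most $3/\nu$ which both starts and finishes at $a$.
   Context: The notation $\eta \ll 1$ means $\eta$ is chosen sufficiently small (below some absolute positive constant). For a graph $G$ on $n$ vertices and $S \subseteq V(G)$, $RN_{\nu,G}(S)$ is the set of vertices $v$ with $|N(v) \cap S| \geq \nu n$; $G$ is a robust $(\nu,\tau)$-expander if every $S \subseteq V(G)$ with $\tau n \leq |S| \leq (1-\tau)n$ satisfies $|RN_{\nu,G}(S)| \geq |S| + \nu n$. Given a perfect matching $M$ in $G$, a shifted $M$-walk with endpoints $v_1$ and $v_{2\ell}$ is a walk $v_1 v_2 \dots v_{2\ell}$ in $G$ such that $v_{2i}v_{2i+1} \in M$ for every $1 \leq i \leq \ell - 1$ and $v_{2i-1}v_{2i} \notin M$ for every $1 \leq i \leq \ell$; its length is its number of edges. *)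

theory Defs
  imports Main "HOL-Library.Multiset" Complex_Main
begin

definition simple_graph :: "'a set \<Rightarrow> 'a set set \<Rightarrow> bool" where
  "simple_graph V E \<longleftrightarrow> finite V \<and>
     (\<forall>e\<in>E. \<exists>u v. u \<in> V \<and> v \<in> V \<and> u \<noteq> v \<and> e = {u, v})"

definition nbhd :: "'a set \<Rightarrow> 'a set set \<Rightarrow> 'a \<Rightarrow> 'a set" where
  "nbhd V E v = {u \<in> V. {u, v} \<in> E}"

definition min_degree_ge :: "'a set \<Rightarrow> 'a set set \<Rightarrow> real \<Rightarrow> bool" where
  "min_degree_ge V E d \<longleftrightarrow> (\<forall>v\<in>V. real (card (nbhd V E v)) \<ge> d)"

definition robust_nbhd :: "'a set \<Rightarrow> 'a set set \<Rightarrow> real \<Rightarrow> 'a set \<Rightarrow> 'a set" where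
  "robust_nbhd V E \<nu> S =
     {v \<in> V. real (card (nbhd V E v \<inter> S)) \<ge> \<nu> * real (card V)}"

definition robust_expander :: "'a set \<Rightarrow> 'a set set \<Rightarrow> real \<Rightarrow> real \<Rightarrow> bool" where
  "robust_expander V E \<nu> \<tau> \<longleftrightarrow>
     (\<forall>S. S \<subseteq> V \<and> \<tau> * real (card V) \<le> real (card S)
          \<and> real (card S) \<le> (1 - \<tau>) * real (card V) \<longrightarrow>
        real (card (robust_nbhd V E \<nu> S)) \<ge> real (card S) + \<nu> * real (card V))"

definition perfect_matching :: "'a set \<Rightarrow> 'a set set \<Rightarrow> 'a set set \<Rightarrow> bool" where
  "perfect_matching V E M \<longleftrightarrow> M \<subseteq> E \<and> (\<forall>v\<in>V. \<exists>!e. e \<in> M \<and> v \<in> e)"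

text \<open>Shifted M-walk given as the vertex list [v_1, ..., v_{2l}] (l >= 1).
  With 0-based indices j: every consecutive pair is an edge, pairs starting at
  odd j are in M, pairs starting at even j are not in M.  Its length
  (number of edges) is length xs - 1.\<close>
definition shifted_M_walk :: "'a set set \<Rightarrow> 'a set set \<Rightarrow> 'a list \<Rightarrow> bool" where
  "shifted_M_walk E M xs \<longleftrightarrow> xs \<noteq> [] \<and> even (length xs) \<and>
     (\<forall>j. j + 1 < length xs \<longrightarrow> {xs ! j, xs ! (j + 1)} \<in> E) \<and>
     (\<forall>j. j + 1 < length xs \<and> odd j \<longrightarrow> {xs ! j, xs ! (j + 1)} \<in> M) \<and>
     (\<forall>j. j + 1 < length xs \<and> even j \<longrightarrow> {xs ! j, xs ! (j + 1)} \<notin> M)"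

end

theory Submission
  imports Defs
begin

locale pmg =
  fixes V :: "'a set" and E :: "'a set set" and M :: "'a set set"
  assumes sg: "simple_graph V E" and pm: "perfect_matching V E M"
begin

lemma finV: "finite V" using sg by (simp add: simple_graph_def)

lemma ME: "M \<subseteq> E" using pm by (simp add: perfect_matching_def)

lemma edgeV: "{x,y} \<in> E \<Longrightarrow> x \<in> V \<and> y \<in> V \<and> x \<noteq> y"
proof -
  assume "{x,y} \<in> E"
  then obtain u v where "u \<in> V" "v \<in> V" "u \<noteq> v" "{x,y} = {u,v}"
    using sg unfolding simple_graph_def by blast
  thus ?thesis by (auto simp: doubleton_eq_iff)
qed

definition m :: "'a \<Rightarrow> 'a" where "m v = (SOME u. {v,u} \<in> M)"

lemma m_ex: "v \<in> V \<Longrightarrow> \<exists>u. {v,u} \<in> M"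
proof -
  assume "v \<in> V"
  then obtain e where e: "e \<in> M" "v \<in> e" using pm unfolding perfect_matching_def by blast
  then have "e \<in> E" using ME by blast
  then obtain p q where pq: "e = {p,q}" using sg unfolding simple_graph_def by blast
  show ?thesis
  proof (cases "v = p")
    case True then show ?thesis using e pq by blast
  next
    case False then have "v = q" using e pq by blast
    then show ?thesis using e pq by (auto simp: insert_commute)
  qed
qed

lemma mM: "v \<in> V \<Longrightarrow> {v, m v} \<in> M"
  unfolding m_def using m_ex by (rule someI_ex)

lemma m_uniq: assumes "v \<in> V" "{v,u} \<in> M" shows "u = m v"
proof -
  have 1: "{v, m v} \<in> M" using mM assms by blast
  have "\<exists>!e. e \<in> M \<and> v \<in> e" using pm assms(1) unfolding perfect_matching_def by simp
  moreover have "{v,u} \<in> M \<and> v \<in> {v,u}" using assms by simp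
  moreover have "{v,m v} \<in> M \<and> v \<in> {v,m v}" using 1 by simp
  ultimately have 2: "{v,u} = {v, m v}" by (elim ex1E) blast
  have "u \<noteq> v" using edgeV assms ME by blast
  then show ?thesis using 2 by (auto simp: doubleton_eq_iff)
qed

lemma mE: "v \<in> V \<Longrightarrow> {v, m v} \<in> E" using mM ME by blast
lemma mV: "v \<in> V \<Longrightarrow> m v \<in> V" using edgeV[OF mE] by simp
lemma mne: "v \<in> V \<Longrightarrow> m v \<noteq> v" using edgeV[OF mE[of v]] by auto
lemma mm: "v \<in> V \<Longrightarrow> m (m v) = v"
proof -
  assume v: "v \<in> V"
  have "{m v, v} \<in> M" using mM[OF v] by (simp add: insert_commute)
  then show ?thesis using m_uniq[OF mV[OF v]] by simp
qed
lemma inj_m: "inj_on m V"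
proof (rule inj_onI)
  fix x y assume "x \<in> V" "y \<in> V" "m x = m y"
  then have "m (m x) = m (m y)" by simp
  then show "x = y" using mm \<open>x \<in> V\<close> \<open>y \<in> V\<close> by simp
qed

inductive reach :: "'a \<Rightarrow> nat \<Rightarrow> 'a \<Rightarrow> bool" where
  r0: "reach x 0 x"
| rS: "{x,y} \<in> E \<Longrightarrow> {x,y} \<notin> M \<Longrightarrow> reach (m y) k z \<Longrightarrow> reach x (Suc k) z"

lemma reach_V: "reach x k z \<Longrightarrow> x \<in> V \<Longrightarrow> z \<in> V"
proof (induction rule: reach.induct)
  case (r0 x) then show ?case by simp
next
  case (rS x y k z) then show ?case using edgeV[OF rS(1)] mV by blast
qed

lemma reach_trans: "reach x k y \<Longrightarrow> reach y j z \<Longrightarrow> reach x (k+j) z"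
  by (induction rule: reach.induct) (auto intro: reach.intros)

lemma reach_snoc: "reach x k s \<Longrightarrow> {s,y} \<in> E \<Longrightarrow> {s,y} \<notin> M \<Longrightarrow> reach x (Suc k) (m y)"
  using reach_trans[of x k s 1 "m y"] by (simp add: reach.intros)

lemma reach_rev: "reach x k z \<Longrightarrow> x \<in> V \<Longrightarrow> reach (m z) k (m x)"
proof (induction rule: reach.induct)
  case (r0 x) then show ?case by (simp add: reach.r0)
next
  case (rS x y k z)
  have yV: "y \<in> V" "x \<in> V" using edgeV[OF rS(1)] by auto
  have "reach (m z) k y" using rS.IH mV yV mm by metis
  moreover have "{y,x} \<in> E" "{y,x} \<notin> M" using rS by (auto simp: insert_commute)
  ultimately show ?case using reach_snoc by blast
qed

lemma reach0: "reach x 0 z \<Longrightarrow> z = x" by (cases rule: reach.cases) auto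

lemma reach_Suc_cases: "reach x (Suc k) z \<Longrightarrow> \<exists>s y. reach x k s \<and> {s,y} \<in> E \<and> {s,y} \<notin> M \<and> z = m y"
proof (induction k arbitrary: x z)
  case 0
  then obtain y where "{x,y} \<in> E" "{x,y} \<notin> M" "reach (m y) 0 z" by (cases rule: reach.cases) auto
  then show ?case using reach0 reach.r0 by blast
next
  case (Suc k)
  from Suc.prems obtain y where y: "{x,y} \<in> E" "{x,y} \<notin> M" "reach (m y) (Suc k) z" by (cases rule: reach.cases) auto
  then obtain s y' where "reach (m y) k s" "{s,y'} \<in> E" "{s,y'} \<notin> M" "z = m y'" using Suc.IH by blast
  then show ?case using y reach.rS by blast
qed

lemma walk_cons2:
  assumes "shifted_M_walk E M xs" "{x,y} \<in> E" "{x,y} \<notin> M" "{y, hd xs} \<in> M"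
  shows "shifted_M_walk E M (x # y # xs)"
proof -
  have ne: "xs \<noteq> []" using assms(1) by (simp add: shifted_M_walk_def)
  have h: "xs ! 0 = hd xs" using ne by (simp add: hd_conv_nth)
  show ?thesis unfolding shifted_M_walk_def
  proof (intro conjI allI impI)
    show "x # y # xs \<noteq> []" by simp
    show "even (length (x # y # xs))" using assms(1) by (simp add: shifted_M_walk_def)
  next
    fix j assume j: "j + 1 < length (x # y # xs)"
    show "{(x # y # xs) ! j, (x # y # xs) ! (j + 1)} \<in> E"
    proof (cases j)
      case 0 then show ?thesis using assms by simp
    next
      case (Suc i) note i = this
      show ?thesis
      proof (cases i)
        case 0 then show ?thesis using i assms(4) ME h by auto
      next
        case (Suc l) then show ?thesis using i j assms(1) unfolding shifted_M_walk_def by auto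
      qed
    qed
  next
    fix j assume j: "j + 1 < length (x # y # xs) \<and> odd j"
    show "{(x # y # xs) ! j, (x # y # xs) ! (j + 1)} \<in> M"
    proof (cases j)
      case 0 then show ?thesis using j by simp
    next
      case (Suc i) note i = this
      show ?thesis
      proof (cases i)
        case 0 then show ?thesis using i assms(4) h by auto
      next
        case (Suc l) then show ?thesis using i j assms(1) unfolding shifted_M_walk_def by auto
      qed
    qed
  next
    fix j assume j: "j + 1 < length (x # y # xs) \<and> even j"
    show "{(x # y # xs) ! j, (x # y # xs) ! (j + 1)} \<notin> M"
    proof (cases j)
      case 0 then show ?thesis using assms by simp
    next
      case (Suc i) note i = this
      show ?thesis
      proof (cases i)
        case 0 then show ?thesis using i j by auto
      next
        case (Suc l) then show ?thesis using i j assms(1) unfolding shifted_M_walk_def by auto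
      qed
    qed
  qed
qed

lemma reach_walk:
  "reach x k s \<Longrightarrow> {s,w} \<in> E \<Longrightarrow> {s,w} \<notin> M \<Longrightarrow> x \<in> V \<Longrightarrow>
   \<exists>xs. shifted_M_walk E M xs \<and> hd xs = x \<and> last xs = w \<and> length xs = 2*(k+1)"
proof (induction rule: reach.induct)
  case (r0 x)
  have "shifted_M_walk E M [x,w]" using r0 unfolding shifted_M_walk_def
    by (auto simp: less_Suc_eq intro: odd_pos)
  then show ?case by fastforce
next
  case (rS x y k z)
  have "y \<in> V" using edgeV[OF rS(1)] by blast
  then obtain xs where xs: "shifted_M_walk E M xs" "hd xs = m y" "last xs = w" "length xs = 2*(k+1)"
    using rS mV by blast
  have "shifted_M_walk E M (x # y # xs)"
    using walk_cons2 xs rS mM \<open>y \<in> V\<close> by auto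
  moreover have "xs \<noteq> []" using xs by auto
  ultimately show ?case using xs by (intro exI[of _ "x#y#xs"]) auto
qed


definition U :: "'a \<Rightarrow> nat \<Rightarrow> 'a set" where "U a k = {z. \<exists>j\<le>k. reach a j z}"

lemma U_V: "a \<in> V \<Longrightarrow> U a k \<subseteq> V" unfolding U_def using reach_V by blast
lemma U_fin: "a \<in> V \<Longrightarrow> finite (U a k)" using U_V finV finite_subset by blast
lemma U_mono: assumes "i \<le> j" shows "U a i \<subseteq> U a j"
proof
  fix z assume "z \<in> U a i"
  then obtain l where "l \<le> i" "reach a l z" unfolding U_def by blast
  then have "l \<le> j" "reach a l z" using assms by auto
  then show "z \<in> U a j" unfolding U_def by blast
qed
lemma a_U: "a \<in> U a k" unfolding U_def using reach.r0 by blast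
lemma U_step: "x \<in> U a k \<Longrightarrow> {x,y} \<in> E \<Longrightarrow> {x,y} \<notin> M \<Longrightarrow> m y \<in> U a (Suc k)"
  unfolding U_def using reach_snoc by fastforce

lemma closed_walk:
  assumes "reach a K (m a)" "K \<ge> 1" "a \<in> V"
  shows "\<exists>xs. shifted_M_walk E M xs \<and> hd xs = a \<and> last xs = a \<and> length xs = 2*K"
proof -
  obtain K' where K': "K = Suc K'" using assms(2) by (cases K) auto
  obtain s y where sy: "reach a K' s" "{s,y} \<in> E" "{s,y} \<notin> M" "m a = m y"
    using reach_Suc_cases assms(1) K' by blast
  have "y \<in> V" using edgeV[OF sy(2)] by simp
  then have "y = a" using sy(4) mm assms(3) by metis
  then show ?thesis using reach_walk[OF sy(1)] sy K' assms(3) by auto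
qed

lemma meet:
  assumes "x \<in> U a k" "z \<in> U a j" "{x,z} \<in> E" "{x,z} \<notin> M" "a \<in> V"
  shows "\<exists>xs. shifted_M_walk E M xs \<and> hd xs = a \<and> last xs = a \<and> real (length xs - 1) \<le> 2*(real k + real j) + 1"
proof -
  obtain k1 where k1: "k1 \<le> k" "reach a k1 x" using assms(1) unfolding U_def by blast
  obtain j1 where j1: "j1 \<le> j" "reach a j1 z" using assms(2) unfolding U_def by blast
  have "reach a (Suc k1) (m z)" using reach_snoc[OF k1(2) assms(3,4)] .
  moreover have "reach (m z) j1 (m a)" using reach_rev[OF j1(2) assms(5)] .
  ultimately have "reach a (Suc k1 + j1) (m a)" by (rule reach_trans)
  then obtain xs where "shifted_M_walk E M xs" "hd xs = a" "last xs = a" "length xs = 2*(Suc k1 + j1)"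
    using closed_walk assms(5) by fastforce
  moreover have "real (2*(Suc k1 + j1) - 1) \<le> 2*(real k + real j) + 1" using k1 j1 by simp
  ultimately show ?thesis by metis
qed

lemma nbhd_U1: "a \<in> V \<Longrightarrow> m ` nbhd V E a \<subseteq> U a 1"
proof
  fix w assume a: "a \<in> V" and "w \<in> m ` nbhd V E a"
  then obtain y where y: "y \<in> V" "{y,a} \<in> E" "w = m y" unfolding nbhd_def by blast
  show "w \<in> U a 1"
  proof (cases "{a,y} \<in> M")
    case True
    then have "y = m a" using m_uniq a by blast
    then have "w = a" using y mm a by simp
    then show ?thesis using a_U by simp
  next
    case False
    then show ?thesis using U_step[OF a_U[of a 0], of y] y by (simp add: insert_commute)
  qed
qed

lemma RN_U:
  assumes "a \<in> V" "\<nu> > 0" "V \<noteq> {}"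
  shows "m ` robust_nbhd V E \<nu> (U a k) \<subseteq> U a (Suc k)"
proof
  fix w assume "w \<in> m ` robust_nbhd V E \<nu> (U a k)"
  then obtain v where v: "v \<in> V" "real (card (nbhd V E v \<inter> U a k)) \<ge> \<nu> * real (card V)" "w = m v"
    unfolding robust_nbhd_def by blast
  have "card V > 0" using assms finV by (simp add: card_gt_0_iff)
  then have "\<nu> * real (card V) > 0" using assms by simp
  then have "nbhd V E v \<inter> U a k \<noteq> {}" using v(2) by (metis card.empty of_nat_0 not_le)
  then obtain x where x: "x \<in> V" "{x,v} \<in> E" "x \<in> U a k" unfolding nbhd_def by blast
  show "w \<in> U a (Suc k)"
  proof (cases "{x,v} \<in> M")
    case True
    then have "v = m x" using m_uniq x by blast
    then have "w = x" using v mm x by simp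
    then show ?thesis using x U_mono[of k "Suc k" a] by auto
  next
    case False
    then show ?thesis using U_step[OF x(3) x(2)] v by simp
  qed
qed

lemma card_RN_U:
  assumes "a \<in> V" "\<nu> > 0"
  shows "card (robust_nbhd V E \<nu> (U a k)) \<le> card (U a (Suc k))"
proof -
  have "V \<noteq> {}" using assms by auto
  have sub: "robust_nbhd V E \<nu> (U a k) \<subseteq> V" unfolding robust_nbhd_def by auto
  have "card (robust_nbhd V E \<nu> (U a k)) = card (m ` robust_nbhd V E \<nu> (U a k))"
    using card_image[OF inj_on_subset[OF inj_m sub]] by simp
  also have "\<dots> \<le> card (U a (Suc k))"
    using card_mono[OF U_fin[OF assms(1)] RN_U[OF assms(1,2) \<open>V \<noteq> {}\<close>]] .
  finally show ?thesis .
qed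

lemma card_U1:
  assumes "a \<in> V" shows "card (nbhd V E a) \<le> card (U a 1)"
proof -
  have sub: "nbhd V E a \<subseteq> V" unfolding nbhd_def by auto
  have "card (nbhd V E a) = card (m ` nbhd V E a)"
    using card_image[OF inj_on_subset[OF inj_m sub]] by simp
  also have "\<dots> \<le> card (U a 1)" using card_mono[OF U_fin[OF assms] nbhd_U1[OF assms]] .
  finally show ?thesis .
qed

lemma U_stab1:
  assumes "U a (Suc k) = U a k"
  shows "U a (Suc (Suc k)) = U a (Suc k)"
proof
  show "U a (Suc k) \<subseteq> U a (Suc (Suc k))" using U_mono by simp
  show "U a (Suc (Suc k)) \<subseteq> U a (Suc k)"
  proof
    fix z assume "z \<in> U a (Suc (Suc k))"
    then obtain j where j: "j \<le> Suc (Suc k)" "reach a j z" unfolding U_def by blast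
    show "z \<in> U a (Suc k)"
    proof (cases "j \<le> Suc k")
      case True then show ?thesis using j unfolding U_def by blast
    next
      case False
      then have "j = Suc (Suc k)" using j by simp
      then obtain s y where sy: "reach a (Suc k) s" "{s,y} \<in> E" "{s,y} \<notin> M" "z = m y"
        using reach_Suc_cases j by blast
      have "s \<in> U a k" using sy(1) assms unfolding U_def by blast
      then show ?thesis using U_step sy by blast
    qed
  qed
qed

lemma U_stab_d:
  assumes "U a (Suc k) = U a k"
  shows "U a (k + d) = U a k \<and> U a (Suc (k + d)) = U a (k + d)"
proof (induction d)
  case 0 then show ?case using assms by simp
next
  case (Suc d)
  then show ?case using U_stab1[of a "k + d"] by simp
qed

lemma U_stab:
  assumes "U a (Suc k) = U a k" "k \<le> i"
  shows "U a i = U a k"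
  using U_stab_d[OF assms(1), of "i - k"] assms(2) by simp

lemma U_stab_ex:
  assumes "a \<in> V"
  shows "\<exists>k < card V. U a (Suc k) = U a k"
proof (rule ccontr)
  assume "\<not> ?thesis"
  then have ne: "\<And>k. k < card V \<Longrightarrow> U a (Suc k) \<noteq> U a k" by simp
  have "\<And>i. i \<le> card V \<Longrightarrow> card (U a i) \<ge> Suc i"
  proof -
    fix i show "i \<le> card V \<Longrightarrow> card (U a i) \<ge> Suc i"
    proof (induction i)
      case 0
      have "U a 0 \<noteq> {}" using a_U[of a 0] by (auto simp del: U_def)
      then have "card (U a 0) > 0" using U_fin[OF assms] by (simp add: card_gt_0_iff)
      then show ?case by simp
    next
      case (Suc i)
      have "i < card V" using Suc.prems by simp
      then have "U a (Suc i) \<noteq> U a i" by (rule ne)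
      moreover have "U a i \<subseteq> U a (Suc i)" using U_mono[of i "Suc i" a] by simp
      ultimately have "U a i \<subset> U a (Suc i)" by blast
      then have "card (U a i) < card (U a (Suc i))" by (rule psubset_card_mono[OF U_fin[OF assms]])
      moreover have "card (U a i) \<ge> Suc i" using Suc.IH Suc.prems by simp
      ultimately show ?case by simp
    qed
  qed
  then have "card (U a (card V)) \<ge> Suc (card V)" by simp
  moreover have "card (U a (card V)) \<le> card V" using card_mono[OF finV U_V[OF assms]] .
  ultimately show False by simp
qed


lemma meet_reach:
  assumes "x \<in> U a k" "z \<in> U a j" "{x,z} \<in> E" "{x,z} \<notin> M" "a \<in> V"
  shows "m a \<in> U a (Suc (k + j))"
proof -
  obtain k1 where k1: "k1 \<le> k" "reach a k1 x" using assms(1) unfolding U_def by blast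
  obtain j1 where j1: "j1 \<le> j" "reach a j1 z" using assms(2) unfolding U_def by blast
  have "reach a (Suc k1) (m z)" using reach_snoc[OF k1(2) assms(3,4)] .
  moreover have "reach (m z) j1 (m a)" using reach_rev[OF j1(2) assms(5)] .
  ultimately have "reach a (Suc k1 + j1) (m a)" by (rule reach_trans)
  moreover have "Suc k1 + j1 \<le> Suc (k + j)" using k1 j1 by simp
  ultimately show ?thesis unfolding U_def by blast
qed

lemma RN_mono: "S \<subseteq> S' \<Longrightarrow> finite V \<Longrightarrow> robust_nbhd V E \<nu> S \<subseteq> robust_nbhd V E \<nu> S'"
proof
  fix v assume S: "S \<subseteq> S'" "finite V" and v: "v \<in> robust_nbhd V E \<nu> S"
  have fin: "finite (nbhd V E v \<inter> S')" using S(2) unfolding nbhd_def by simp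
  have "card (nbhd V E v \<inter> S) \<le> card (nbhd V E v \<inter> S')"
    using card_mono[OF fin] S(1) by blast
  then show "v \<in> robust_nbhd V E \<nu> S'" using v unfolding robust_nbhd_def by auto
qed

lemma ceil_le: "0 \<le> x \<Longrightarrow> real (nat \<lceil>x\<rceil>) \<le> x + 1"
proof -
  assume "0 \<le> x"
  then have "\<lceil>x\<rceil> \<ge> 0" by simp
  then have "real (nat \<lceil>x\<rceil>) = of_int \<lceil>x\<rceil>" by simp
  then show ?thesis using of_int_ceiling_le_add_one[of x] by linarith
qed

lemma floor_gt: "0 \<le> x \<Longrightarrow> x - 1 < real (nat \<lfloor>x\<rfloor>)"
proof -
  assume "0 \<le> x"
  then have "\<lfloor>x\<rfloor> \<ge> 0" by simp
  then have "real (nat \<lfloor>x\<rfloor>) = of_int \<lfloor>x\<rfloor>" by simp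
  then show ?thesis using real_of_int_floor_gt_diff_one[of x] by linarith
qed


lemma onemtau: "0 < (\<tau>::real) \<Longrightarrow> \<tau> < 1/10 \<Longrightarrow> 2 \<le> (n::real) \<Longrightarrow> (1 - 2 * \<tau>) * n \<ge> 1"
proof -
  assume h: "0 < \<tau>" "\<tau> < 1/10" "2 \<le> n"
  have "(1 - 2 * \<tau>) * n \<ge> (1/2) * n" using h by (intro mult_right_mono) auto
  then show ?thesis using h by linarith
qed

lemma two_le_n: "a \<in> V \<Longrightarrow> 2 \<le> card V"
proof -
  assume a: "a \<in> V"
  have "{a, m a} \<subseteq> V" using a mV by simp
  then have "card {a, m a} \<le> card V" using card_mono finV by blast
  moreover have "card {a, m a} = 2" using mne[OF a] by simp
  ultimately show ?thesis by simp
qed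

lemma expand:
  assumes "robust_expander V E \<nu> \<tau>" "S \<subseteq> V" "\<tau> * real (card V) \<le> real (card S)"
    "real (card S) \<le> (1 - \<tau>) * real (card V)"
  shows "real (card (robust_nbhd V E \<nu> S)) \<ge> real (card S) + \<nu> * real (card V)"
  using assms unfolding robust_expander_def by blast

lemma large_case:
  assumes par: "0 < \<nu>" "\<nu> \<le> \<tau>" "\<tau> < \<eta>" "\<eta> < 1/10"
    and md: "min_degree_ge V E (\<eta> * real (card V))"
    and ex: "robust_expander V E \<nu> \<tau>"
    and a: "a \<in> V"
    and big: "\<nu> * real (card V) > 1"
  shows "\<exists>xs. shifted_M_walk E M xs \<and> hd xs = a \<and> last xs = a \<and> real (length xs - 1) \<le> 3 / \<nu>"
proof -
  define n where "n = real (card V)"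
  have n2: "n \<ge> 2" using two_le_n[OF a] n_def by simp
  have bign: "\<nu> * n > 1" using big n_def by simp
  have U1: "real (card (U a 1)) \<ge> \<eta> * n"
    using md a card_U1[OF a] unfolding min_degree_ge_def n_def
    by (meson of_nat_le_iff order_trans)
  have grow: "real (card (U a (Suc k))) > (1 - \<tau>) * n \<or> real (card (U a (Suc k))) \<ge> \<eta> * n + real k * \<nu> * n" for k
  proof (induction k)
    case 0 then show ?case using U1 by simp
  next
    case (Suc k)
    have mono: "card (U a (Suc k)) \<le> card (U a (Suc (Suc k)))"
      using card_mono[OF U_fin[OF a] U_mono[of "Suc k" "Suc (Suc k)" a]] by simp
    show ?case
    proof (cases "real (card (U a (Suc k))) > (1 - \<tau>) * n")
      case True
      then show ?thesis using mono by (meson of_nat_le_iff less_le_trans)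
    next
      case False
      then have g: "real (card (U a (Suc k))) \<ge> \<eta> * n + real k * \<nu> * n" using Suc.IH by simp
      have "real k * \<nu> * n \<ge> 0" using par n2 by simp
      then have "real (card (U a (Suc k))) \<ge> \<tau> * n" using g par n2
        by (smt (verit) mult_right_mono)
      then have "real (card (robust_nbhd V E \<nu> (U a (Suc k)))) \<ge> real (card (U a (Suc k))) + \<nu> * n"
        using expand[OF ex U_V[OF a]] False n_def by simp
      moreover have "card (robust_nbhd V E \<nu> (U a (Suc k))) \<le> card (U a (Suc (Suc k)))"
        using card_RN_U[OF a par(1)] .
      ultimately have "real (card (U a (Suc (Suc k)))) \<ge> \<eta> * n + real k * \<nu> * n + \<nu> * n"
        using g by linarith
      then show ?thesis by (simp add: algebra_simps)
    qed
  qed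
  define K0 where "K0 = nat \<lceil>1 / (2 * \<nu>)\<rceil>"
  define K where "K = Suc K0"
  have K0ge: "real K0 \<ge> 1 / (2 * \<nu>)" unfolding K0_def by (rule real_nat_ceiling_ge)
  have K0le: "real K0 \<le> 1 / (2 * \<nu>) + 1" unfolding K0_def using par by (intro ceil_le) simp
  define S where "S = U a K"
  have SV: "S \<subseteq> V" unfolding S_def using U_V[OF a] .
  have finS: "finite S" using SV finV finite_subset by blast
  have "real K0 * \<nu> * n \<ge> 1 / (2 * \<nu>) * \<nu> * n"
    using K0ge par n2 by (intro mult_right_mono) auto
  then have K0n: "real K0 * \<nu> * n \<ge> n / 2" using par by (simp add: field_simps)
  have Shalf: "real (card S) \<ge> n / 2"
  proof -
    have "\<eta> * n \<ge> 0" using par n2 by simp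
    moreover have "(1 - \<tau>) * n \<ge> n / 2"
    proof -
      have "(1 - \<tau>) * n - n / 2 = (1/2 - \<tau>) * n" by (simp add: algebra_simps)
      moreover have "(1/2 - \<tau>) * n \<ge> 0" using par n2 by simp
      ultimately show ?thesis by linarith
    qed
    ultimately show ?thesis using grow[of K0] K0n unfolding S_def K_def by linarith
  qed
  have sum: "real (card (robust_nbhd V E \<nu> S)) + real (card S) > n"
  proof (cases "real (card S) \<le> (1 - \<tau>) * n")
    case True
    have "\<tau> * n \<le> n / 2" using par n2 by simp
    then have "real (card (robust_nbhd V E \<nu> S)) \<ge> real (card S) + \<nu> * n"
      using expand[OF ex SV] True Shalf n_def by simp
    then show ?thesis using Shalf bign by linarith
  next
    case False
    define s where "s = nat \<lfloor>(1 - \<tau>) * n\<rfloor>"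
    have s1: "real s \<le> (1 - \<tau>) * n" unfolding s_def using par n2 by (intro of_nat_floor) simp
    have s2: "real s > (1 - \<tau>) * n - 1" unfolding s_def using par n2 by (intro floor_gt) simp
    have "s \<le> card S" using s1 False by linarith
    then obtain S' where S': "S' \<subseteq> S" "card S' = s" using obtain_subset_with_card_n by metis
    have "(1 - 2 * \<tau>) * n \<ge> 1" using par n2 by (intro onemtau) auto
    then have "\<tau> * n \<le> real (card S')" using s2 S' by (simp add: algebra_simps)
    moreover have "real (card S') \<le> (1 - \<tau>) * n" using s1 S' by simp
    ultimately have "real (card (robust_nbhd V E \<nu> S')) \<ge> real (card S') + \<nu> * n"
      using expand[OF ex] S' SV n_def by (meson order_trans)
    moreover have "card (robust_nbhd V E \<nu> S') \<le> card (robust_nbhd V E \<nu> S)"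
    proof (rule card_mono)
      show "finite (robust_nbhd V E \<nu> S)" using finV unfolding robust_nbhd_def by simp
      show "robust_nbhd V E \<nu> S' \<subseteq> robust_nbhd V E \<nu> S" using RN_mono S'(1) finV by blast
    qed
    ultimately have "real (card (robust_nbhd V E \<nu> S)) \<ge> (1 - \<tau>) * n - 1 + \<nu> * n"
      using s2 S' by linarith
    moreover have e1: "(1 - \<tau>) * n = n - \<tau> * n" by (rule trans[OF left_diff_distrib]) simp
    ultimately have h1: "real (card (robust_nbhd V E \<nu> S)) \<ge> n - \<tau> * n - 1 + \<nu> * n"
      by linarith
    have h2: "real (card S) > n - \<tau> * n" using False unfolding e1 by linarith
    have "(1 - 2 * \<tau>) * n \<ge> 0" using par n2 by simp
    moreover have "(1 - 2 * \<tau>) * n = n - 2 * \<tau> * n" by (rule trans[OF left_diff_distrib]) simp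
    ultimately have h3: "n - 2 * \<tau> * n \<ge> 0" by linarith
    show ?thesis using h1 h2 h3 bign by linarith
  qed
  have "robust_nbhd V E \<nu> S \<inter> S \<noteq> {}"
  proof
    assume dis: "robust_nbhd V E \<nu> S \<inter> S = {}"
    have fR: "finite (robust_nbhd V E \<nu> S)" using finV unfolding robust_nbhd_def by simp
    have "card (robust_nbhd V E \<nu> S \<union> S) = card (robust_nbhd V E \<nu> S) + card S"
      using card_Un_disjoint[OF fR finS dis] .
    moreover have "card (robust_nbhd V E \<nu> S \<union> S) \<le> card V"
      using card_mono[OF finV] SV unfolding robust_nbhd_def by auto
    ultimately show False using sum n_def by linarith
  qed
  then obtain y where y: "y \<in> robust_nbhd V E \<nu> S" "y \<in> S" by blast
  have yV: "y \<in> V" using y unfolding robust_nbhd_def by simp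
  have "real (card (nbhd V E y \<inter> S)) > 1" using y big n_def unfolding robust_nbhd_def by auto
  have "\<not> (nbhd V E y \<inter> S \<subseteq> {m y})"
  proof
    assume "nbhd V E y \<inter> S \<subseteq> {m y}"
    then have "card (nbhd V E y \<inter> S) \<le> card {m y}" by (intro card_mono) auto
    then have "card (nbhd V E y \<inter> S) \<le> 1" by simp
    then show False using \<open>real (card (nbhd V E y \<inter> S)) > 1\<close> by linarith
  qed
  then obtain x where x: "x \<in> nbhd V E y" "x \<in> S" "x \<noteq> m y" by blast
  have xy: "{x,y} \<in> E" using x unfolding nbhd_def by simp
  have xyM: "{x,y} \<notin> M"
  proof
    assume "{x,y} \<in> M"
    then have "{y,x} \<in> M" by (simp add: insert_commute)
    then have "x = m y" using m_uniq yV by blast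
    then show False using x by simp
  qed
  obtain xs where xs: "shifted_M_walk E M xs" "hd xs = a" "last xs = a"
      "real (length xs - 1) \<le> 2 * (real K + real K) + 1"
    using meet[of x a K y K] x y xy xyM a unfolding S_def by blast
  have "2 * (real K + real K) + 1 \<le> 3 / \<nu>"
  proof -
    have "real K = real K0 + 1" unfolding K_def by simp
    then have "2 * (real K + real K) + 1 \<le> 2 / \<nu> + 9" using K0le par by (simp add: field_simps)
    moreover have "1 / \<nu> \<ge> 10" using par by (simp add: field_simps)
    ultimately show ?thesis by (simp add: field_simps)
  qed
  then show ?thesis using xs by (intro exI[of _ xs]) simp
qed


lemma small_case:
  assumes par: "0 < \<nu>" "\<nu> \<le> \<tau>" "\<tau> < \<eta>" "\<eta> < 1/10"
    and md: "min_degree_ge V E (\<eta> * real (card V))"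
    and ex: "robust_expander V E \<nu> \<tau>"
    and a: "a \<in> V"
    and small: "\<nu> * real (card V) \<le> 1"
  shows "\<exists>xs. shifted_M_walk E M xs \<and> hd xs = a \<and> last xs = a \<and> real (length xs - 1) \<le> 3 / \<nu>"
proof -
  define n where "n = real (card V)"
  have n2: "n \<ge> 2" using two_le_n[OF a] n_def by simp
  have U1: "real (card (U a 1)) \<ge> \<eta> * n"
    using md a card_U1[OF a] unfolding min_degree_ge_def n_def
    by (meson of_nat_le_iff order_trans)
  obtain k0 where k0: "k0 < card V" "U a (Suc k0) = U a k0" using U_stab_ex[OF a] by blast
  define R where "R = U a k0"
  have allR: "U a i \<subseteq> R" for i
  proof (cases "i \<le> k0")
    case True then show ?thesis unfolding R_def by (rule U_mono)
  next
    case False then show ?thesis unfolding R_def using U_stab[OF k0(2), of i] by simp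
  qed
  have RV: "R \<subseteq> V" unfolding R_def by (rule U_V[OF a])
  have finR: "finite R" using RV finV finite_subset by blast
  have maR: "m a \<in> R"
  proof (rule ccontr)
    assume nmaR: "m a \<notin> R"
    have clos: "m y \<in> R" if "x \<in> R" "{x,y} \<in> E" "{x,y} \<notin> M" for x y
      using U_step[of x a k0 y] that k0(2) unfolding R_def by simp
    have noedge: "False" if "x \<in> R" "z \<in> R" "{x,z} \<in> E" "{x,z} \<notin> M" for x z
      using meet_reach[of x a k0 z k0] that a allR nmaR unfolding R_def by blast
    define T where "T = {x \<in> R. m x \<notin> R}"
    have key: "robust_nbhd V E \<nu> S \<subseteq> m ` S" if TS: "T \<subseteq> S" "S \<subseteq> R" for S
    proof
      fix v assume v: "v \<in> robust_nbhd V E \<nu> S"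
      have vV: "v \<in> V" using v unfolding robust_nbhd_def by simp
      have "card V > 0" using a finV by (auto simp: card_gt_0_iff)
      then have "\<nu> * real (card V) > 0" using par by simp
      then have "nbhd V E v \<inter> S \<noteq> {}" using v unfolding robust_nbhd_def
        by (metis (no_types, lifting) card.empty mem_Collect_eq not_le of_nat_0)
      then obtain x where x: "x \<in> V" "{x,v} \<in> E" "x \<in> S" unfolding nbhd_def by blast
      have xR: "x \<in> R" using x TS by blast
      show "v \<in> m ` S"
      proof (cases "{x,v} \<in> M")
        case True
        then have "v = m x" using m_uniq x by blast
        then show ?thesis using x by blast
      next
        case False
        have mvR: "m v \<in> R" using clos[OF xR x(2) False] .
        have "v \<notin> R" using noedge[OF xR _ x(2) False] by blast
        then have "m v \<in> T" using mvR mm[OF vV] unfolding T_def by simp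
        then have "m v \<in> S" using TS by blast
        moreover have "v = m (m v)" using mm[OF vV] by simp
        ultimately show ?thesis by blast
      qed
    qed
    have contra: "False" if TS: "T \<subseteq> S" "S \<subseteq> R" and rng: "\<tau> * n \<le> real (card S)" "real (card S) \<le> (1 - \<tau>) * n" for S
    proof -
      have SV: "S \<subseteq> V" using TS RV by blast
      have "real (card (robust_nbhd V E \<nu> S)) \<ge> real (card S) + \<nu> * n"
        using expand[OF ex SV] rng n_def by simp
      moreover have "card (robust_nbhd V E \<nu> S) \<le> card (m ` S)"
        using card_mono[OF finite_imageI key[OF TS]] finR TS finite_subset by blast
      moreover have "card (m ` S) \<le> card S" by (rule card_image_le) (use finR TS finite_subset in blast)
      moreover have "\<nu> * n > 0" using par n2 by simp
      ultimately show False by linarith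
    qed
    have cR: "real (card R) \<ge> \<tau> * n"
    proof -
      have "card (U a 1) \<le> card R" using card_mono[OF finR allR] .
      moreover have "\<eta> * n \<ge> \<tau> * n" using par n2 by (intro mult_right_mono) auto
      ultimately show ?thesis using U1 by linarith
    qed
    show False
    proof (cases "real (card R) \<le> (1 - \<tau>) * n")
      case True
      then show False using contra[of R] cR unfolding T_def by blast
    next
      case False
      have TR: "T \<subseteq> R" unfolding T_def by blast
      have "m ` T \<subseteq> V - R" using RV mV unfolding T_def by blast
      then have "card (m ` T) \<le> card (V - R)" by (intro card_mono) (use finV in auto)
      moreover have "card (m ` T) = card T" using card_image[OF inj_on_subset[OF inj_m]] TR RV by blast
      moreover have "card (V - R) = card V - card R" using card_Diff_subset[OF finR RV] .
      moreover have "card R \<le> card V" using card_mono[OF finV RV] .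
      ultimately have cT: "real (card T) \<le> n - real (card R)" unfolding n_def by simp
      have e1: "(1 - \<tau>) * n = n - \<tau> * n" by (rule trans[OF left_diff_distrib]) simp
      have e2: "(1 - 2 * \<tau>) * n = n - 2 * \<tau> * n" by (rule trans[OF left_diff_distrib]) simp
      have o: "(1 - 2 * \<tau>) * n \<ge> 1" using par n2 by (intro onemtau) auto
      have cR2: "real (card R) > n - \<tau> * n" using False unfolding e1 by linarith
      define s where "s = nat \<lceil>\<tau> * n\<rceil>"
      have s1: "real s \<ge> \<tau> * n" unfolding s_def by (rule real_nat_ceiling_ge)
      have s2: "real s \<le> \<tau> * n + 1" unfolding s_def using par n2 by (intro ceil_le) simp
      have Ts: "card T \<le> s" using cT cR2 s1 by linarith
      have sR: "s \<le> card R" using s2 cR2 o unfolding e2 by linarith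
      have "card (R - T) = card R - card T" using card_Diff_subset[OF finite_subset[OF TR finR] TR] .
      then have "s - card T \<le> card (R - T)" using sR by simp
      then obtain S' where S': "S' \<subseteq> R - T" "card S' = s - card T"
        using obtain_subset_with_card_n by metis
      define S where "S = T \<union> S'"
      have "card S = card T + card S'" unfolding S_def
      proof (rule card_Un_disjoint)
        show "finite T" using finite_subset[OF TR finR] .
        show "finite S'" using finite_subset[of S' R] S'(1) finR by blast
        show "T \<inter> S' = {}" using S'(1) by blast
      qed
      then have cS: "card S = s" using S' Ts by simp
      show False
      proof (rule contra[of S])
        show "T \<subseteq> S" "S \<subseteq> R" unfolding S_def using S' TR by auto
        show "\<tau> * n \<le> real (card S)" using cS s1 by simp
        show "real (card S) \<le> (1 - \<tau>) * n" using cS s2 o unfolding e1 e2 by linarith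
      qed
    qed
  qed
  then obtain j where j: "j \<le> k0" "reach a j (m a)" unfolding R_def U_def by blast
  have "j \<noteq> 0"
  proof
    assume "j = 0"
    then have "m a = a" using j(2) reach0 by simp
    then show False using mne[OF a] by simp
  qed
  then obtain xs where xs: "shifted_M_walk E M xs" "hd xs = a" "last xs = a" "length xs = 2 * j"
    using closed_walk[OF j(2) _ a] by (metis One_nat_def Suc_leI neq0_conv)
  have "real (length xs - 1) \<le> 2 * n" using xs j k0 n_def by simp
  moreover have "n \<le> 1 / \<nu>" using small par n_def by (simp add: field_simps mult.commute)
  ultimately have "real (length xs - 1) \<le> 2 / \<nu>" by (simp add: field_simps)
  moreover have "2 / \<nu> \<le> 3 / \<nu>" using par by (simp add: divide_right_mono)
  ultimately show ?thesis using xs by (intro exI[of _ xs]) simp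
qed

end

theorem lemma5p3:
  "\<exists>c::real. c > 0 \<and>
     (\<forall>(\<nu>::real) (\<tau>::real) (\<eta>::real). 0 < \<nu> \<and> \<nu> \<le> \<tau> \<and> \<tau> < \<eta> \<and> \<eta> < c \<longrightarrow>
       (\<forall>(V::nat set) E M. simple_graph V E
          \<and> min_degree_ge V E (\<eta> * real (card V))
          \<and> robust_expander V E \<nu> \<tau>
          \<and> perfect_matching V E M \<longrightarrow>
          (\<forall>a\<in>V. \<exists>xs. shifted_M_walk E M xs \<and> hd xs = a \<and> last xs = a
                     \<and> real (length xs - 1) \<le> 3 / \<nu>)))"
proof (intro exI[of _ "1/10"] conjI allI impI ballI)
  show "(0::real) < 1/10" by simp
next
  fix \<nu> \<tau> \<eta> :: real and V :: "nat set" and E M a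
  assume par: "0 < \<nu> \<and> \<nu> \<le> \<tau> \<and> \<tau> < \<eta> \<and> \<eta> < 1/10"
    and G: "simple_graph V E \<and> min_degree_ge V E (\<eta> * real (card V))
          \<and> robust_expander V E \<nu> \<tau> \<and> perfect_matching V E M"
    and a: "a \<in> V"
  interpret pmg V E M using G by unfold_locales auto
  show "\<exists>xs. shifted_M_walk E M xs \<and> hd xs = a \<and> last xs = a \<and> real (length xs - 1) \<le> 3 / \<nu>"
  proof (cases "\<nu> * real (card V) > 1")
    case True
    then show ?thesis using large_case[of \<nu> \<tau> \<eta> a] par G a by blast
  next
    case False
    then show ?thesis using small_case[of \<nu> \<tau> \<eta> a] par G a by simp
  qed
qed

end
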